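(* Let $I\ge1$ and $B\ge1$ be integers. For real weights $b_{-B},\dots,b_B$ call the $I\times I$ matrix $\mathbf{B}$ defined by $(\mathbf{B}\mathbf{f})_i=\sum_{j=-B}^{B}b_j\,\mathrm{f}_{i+j}$ (indices taken periodically modulo $I$) a periodic convolution matrix; call it zero-sum if $\sum_{j=-B}^{B}b_j=0$ (e.g. when $b_j=\tilde b_j-\frac{1}{2B+1}\sum_{k=-B}^B\tilde b_k$ for arbitrary $\tilde b$). For $m=1,2,3$ let $$\mathcal{B}_m=\begin{bmatrix}\mathbf{B}_m^{11}&\mathbf{B}_m^{12}\\ \mathbf{B}_m^{21}&\mathbf{B}_m^{22}\end{bmatrix}\in\mathbb{R}^{2I\times2I},$$ where each $\mathbf{B}_m^{jl}$ is a periodic convolution matrix and $\mathbf{B}_m^{11},\mathbf{B}_m^{21}$ are zero-sum, for $m=1,2,3$. Let $\boldsymbol{\Omega}\in\mathbb{R}^{I\times I}$ be diagonal with positive entries, $\boldsymbol{\Omega}_2=\mathrm{diag}(\boldsymbol{\Omega},\boldsymbol{\Omega})$, and let $f_H:\mathbb{R}^I\to\mathbb{R}^I$ satisfy $\mathbf{1}_I^T\boldsymbol{\Omega}f_H(\bar{\mathbf{u}})=0$ for all $\bar{\mathbf{u}}$. Let $\mathbf{k}(\mathbf{a}),\mathbf{q}(\mathbf{a})\in\mathbb{R}^{2I\times 2I}$ be arbitrary diagonal matrices depending on $\mathbf{a}$. For $\mathbf{a}=(\bar{\mathbf{u}},\mathbf{s})\in\mathbb{R}^{2I}$ set $$\mathcal{G}(\mathbf{a})=\begin{bmatrix}f_H(\bar{\mathbf{u}})\\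 \mathbf{0}\end{bmatrix}+\boldsymbol{\Omega}_2^{-1}\big(\mathcal{B}_2^T\mathbf{k}(\mathbf{a})\mathcal{B}_3-\mathcal{B}_3^T\mathbf{k}(\mathbf{a})\mathcal{B}_2\big)\mathbf{a}-\boldsymbol{\Omega}_2^{-1}\mathcal{B}_1^T\mathbf{q}(\mathbf{a})^2\mathcal{B}_1\mathbf{a}.$$ Then for every $\mathbf{a}$, $\begin{bmatrix}\mathbf{1}_I\\ \mathbf{0}\end{bmatrix}^T\boldsymbol{\Omega}_2\,\mathcal{G}(\mathbf{a})=0$; consequently along any solution of $\frac{d\mathbf{a}}{dt}=\mathcal{G}(\mathbf{a})$ the discrete momentum $\mathbf{1}_I^T\boldsymbol{\Omega}\bar{\mathbf{u}}$ is constant in time, for all values of the weights and of $\mathbf{k},\mathbf{q}$.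
   Context: This is the structure-preserving closure model with periodic boundary conditions: $\bar{\mathbf{u}}$ is the coarse-grid filtered solution, $\mathbf{s}$ auxiliary subgrid-scale variables, $f_H$ a momentum-conserving coarse-grid discretization, and $\mathbf{k},\mathbf{q}$ are diagonal fields produced by a neural network. $\mathbf{1}_I$ is the all-ones vector in $\mathbb{R}^I$. *)

theory Defs
  imports Complex_Main "Jordan_Normal_Form.Matrix"
begin

definition conv_mat :: "nat \<Rightarrow> nat \<Rightarrow> (int \<Rightarrow> real) \<Rightarrow> real mat" where
  "conv_mat I B b = mat I I (\<lambda>(i,l).
      \<Sum>j\<in>{- int B..int B}. if (int i + j) mod int I = int l then b j else 0)"

definition zero_sum :: "nat \<Rightarrow> (int \<Rightarrow> real) \<Rightarrow> bool" where
  "zero_sum B b \<longleftrightarrow> (\<Sum>j\<in>{- int B..int B}. b j) = 0"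

definition block_conv :: "nat \<Rightarrow> nat \<Rightarrow> (nat \<Rightarrow> nat \<Rightarrow> int \<Rightarrow> real) \<Rightarrow> real mat" where
  "block_conv I B w = four_block_mat
     (conv_mat I B (w 1 1)) (conv_mat I B (w 1 2))
     (conv_mat I B (w 2 1)) (conv_mat I B (w 2 2))"

definition ones_vec :: "nat \<Rightarrow> real vec" where
  "ones_vec n = vec n (\<lambda>_. 1)"

definition Omega2 :: "nat \<Rightarrow> real mat \<Rightarrow> real mat" where
  "Omega2 I Om = four_block_mat Om (0\<^sub>m I I) (0\<^sub>m I I) Om"

definition diag_inv :: "real mat \<Rightarrow> real mat" where
  "diag_inv D = mat (dim_row D) (dim_col D) (\<lambda>(i,j). if i = j then 1 / D $$ (i,i) else 0)"

definition closure_rhs ::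
  "nat \<Rightarrow> nat \<Rightarrow> (nat \<Rightarrow> nat \<Rightarrow> nat \<Rightarrow> int \<Rightarrow> real) \<Rightarrow> real mat \<Rightarrow>
   (real vec \<Rightarrow> real vec) \<Rightarrow> (real vec \<Rightarrow> real mat) \<Rightarrow> (real vec \<Rightarrow> real mat) \<Rightarrow>
   real vec \<Rightarrow> real vec" where
  "closure_rhs I B w Om fH k q a =
     (let B1 = block_conv I B (w 1); B2 = block_conv I B (w 2); B3 = block_conv I B (w 3);
          Oi = diag_inv (Omega2 I Om)
      in (fH (vec_first a I) @\<^sub>v 0\<^sub>v I)
         + Oi *\<^sub>v ((transpose_mat B2 * k a * B3 - transpose_mat B3 * k a * B2) *\<^sub>v a)
         - Oi *\<^sub>v ((transpose_mat B1 * (q a * q a) * B1) *\<^sub>v a))"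

end

theory Submission
  imports Defs
begin


lemma delta_int:
  assumes "0 \<le> c" "c < int I"
  shows "(\<Sum>l<I. if c = int l then x else (0::real)) = x"
proof -
  have "(\<Sum>l<I. if c = int l then x else (0::real)) = (\<Sum>l<I. if l = nat c then x else 0)"
    by (rule sum.cong) (use assms in auto)
  also have "\<dots> = x" using assms by (simp add: sum.delta')
  finally show ?thesis .
qed

lemma conv_carrier[simp]: "conv_mat I B b \<in> carrier_mat I I"
  unfolding conv_mat_def by simp

lemma conv_ones:
  assumes "I \<ge> 1" "zero_sum B b"
  shows "conv_mat I B b *\<^sub>v ones_vec I = 0\<^sub>v I"
proof (rule eq_vecI)
  fix i assume i: "i < dim_vec (0\<^sub>v I :: real vec)"
  hence i: "i < I" by simp
  have "(conv_mat I B b *\<^sub>v ones_vec I) $ i =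
      (\<Sum>l<I. \<Sum>j\<in>{- int B..int B}. if (int i + j) mod int I = int l then b j else 0)"
    using i unfolding conv_mat_def ones_vec_def mult_mat_vec_def scalar_prod_def
    by (simp add: lessThan_atLeast0)
  also have "\<dots> = (\<Sum>j\<in>{- int B..int B}. \<Sum>l<I. if (int i + j) mod int I = int l then b j else 0)"
    by (rule sum.swap)
  also have "\<dots> = (\<Sum>j\<in>{- int B..int B}. b j)"
    by (rule sum.cong[OF refl], rule delta_int) (use assms in auto)
  also have "\<dots> = 0" using assms unfolding zero_sum_def by simp
  finally show "(conv_mat I B b *\<^sub>v ones_vec I) $ i = 0\<^sub>v I $ i" using i by simp
qed (simp add: conv_mat_def)

lemma mat_zero_vec[simp]: "(A :: real mat) \<in> carrier_mat n m \<Longrightarrow> A *\<^sub>v 0\<^sub>v m = 0\<^sub>v n"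
  by (rule eq_vecI) (auto simp: mult_mat_vec_def)

lemma block_carrier[simp]: "block_conv I B w \<in> carrier_mat (2*I) (2*I)"
  unfolding block_conv_def mult_2 by (rule four_block_carrier_mat) simp_all

lemma ones_carrier[simp]: "ones_vec I \<in> carrier_vec I" unfolding ones_vec_def by simp

lemma e_carrier[simp]: "ones_vec I @\<^sub>v 0\<^sub>v I \<in> carrier_vec (2*I)"
  unfolding mult_2 by (rule append_carrier_vec) simp_all

lemma vec_first_app[simp]: "v \<in> carrier_vec n \<Longrightarrow> vec_first (v @\<^sub>v w) n = v"
  by (rule eq_vecI) (auto simp: vec_first_def)

lemma conv_zero[simp]: "conv_mat I B b *\<^sub>v 0\<^sub>v I = 0\<^sub>v I"
  by (rule mat_zero_vec) simp

lemma block_e: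
  assumes "I \<ge> 1" "zero_sum B (w 1 1)" "zero_sum B (w 2 1)"
  shows "block_conv I B w *\<^sub>v (ones_vec I @\<^sub>v 0\<^sub>v I) = 0\<^sub>v (2*I)"
proof -
  have "block_conv I B w *\<^sub>v (ones_vec I @\<^sub>v 0\<^sub>v I) = (0\<^sub>v I + 0\<^sub>v I) @\<^sub>v (0\<^sub>v I + 0\<^sub>v I)"
    unfolding block_conv_def
    by (subst four_block_mat_mult_vec[of _ I I _ I _ I]) (use conv_ones[OF assms(1,2), simplified] conv_ones[OF assms(1,3), simplified] in simp_all)
  also have "\<dots> = 0\<^sub>v (2*I)" by (rule eq_vecI) auto
  finally show ?thesis .
qed

lemma e_transpose:
  assumes "I \<ge> 1" "zero_sum B (w 1 1)" "zero_sum B (w 2 1)" "z \<in> carrier_vec (2*I)"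
  shows "(ones_vec I @\<^sub>v 0\<^sub>v I) \<bullet> (transpose_mat (block_conv I B w) *\<^sub>v z) = 0"
proof -
  have "(ones_vec I @\<^sub>v 0\<^sub>v I) \<bullet> (transpose_mat (block_conv I B w) *\<^sub>v z)
      = (transpose_mat (transpose_mat (block_conv I B w)) *\<^sub>v (ones_vec I @\<^sub>v 0\<^sub>v I)) \<bullet> z"
    by (rule transpose_vec_mult_scalar[symmetric, of _ "2*I" "2*I"]) (use assms in auto)
  also have "\<dots> = 0" using block_e[of I B w] assms by simp
  finally show ?thesis .
qed


theorem mainTheorem3:
  fixes I B :: nat
    and w :: "nat \<Rightarrow> nat \<Rightarrow> nat \<Rightarrow> int \<Rightarrow> real"
    and Om :: "real mat"
    and fH :: "real vec \<Rightarrow> real vec"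
    and k q :: "real vec \<Rightarrow> real mat"
  assumes "I \<ge> 1" and "B \<ge> 1"
    and zs: "\<forall>m\<in>{1,2,3}. zero_sum B (w m 1 1) \<and> zero_sum B (w m 2 1)"
    and Om: "Om \<in> carrier_mat I I" "diagonal_mat Om" "\<forall>i<I. Om $$ (i,i) > 0"
    and fH: "\<forall>u\<in>carrier_vec I. fH u \<in> carrier_vec I \<and> ones_vec I \<bullet> (Om *\<^sub>v fH u) = 0"
    and k: "\<forall>a\<in>carrier_vec (2*I). k a \<in> carrier_mat (2*I) (2*I) \<and> diagonal_mat (k a)"
    and q: "\<forall>a\<in>carrier_vec (2*I). q a \<in> carrier_mat (2*I) (2*I) \<and> diagonal_mat (q a)"
  shows "(\<forall>a\<in>carrier_vec (2*I).
            (ones_vec I @\<^sub>v 0\<^sub>v I) \<bullet> (Omega2 I Om *\<^sub>v closure_rhs I B w Om fH k q a) = 0)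
       \<and> (\<forall>(a :: real \<Rightarrow> real vec) t0 t1. t0 \<le> t1 \<longrightarrow>
            (\<forall>t\<in>{t0..t1}. a t \<in> carrier_vec (2*I) \<and>
               (\<forall>i<2*I. ((\<lambda>s. a s $ i) has_real_derivative
                          (closure_rhs I B w Om fH k q (a t) $ i)) (at t within {t0..t1}))) \<longrightarrow>
            ones_vec I \<bullet> (Om *\<^sub>v vec_first (a t1) I) = ones_vec I \<bullet> (Om *\<^sub>v vec_first (a t0) I))"

proof -
  let ?e = "ones_vec I @\<^sub>v 0\<^sub>v I"
  let ?O2 = "Omega2 I Om"
  have I1: "I \<ge> 1" by fact
  have Omc: "Om \<in> carrier_mat I I" using Om by simp
  have O2c: "?O2 \<in> carrier_mat (2*I) (2*I)"
    unfolding Omega2_def mult_2 using Omc by (intro four_block_carrier_mat) auto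
  have Oic: "diag_inv ?O2 \<in> carrier_mat (2*I) (2*I)"
    using O2c unfolding diag_inv_def by auto
  have Omoff: "\<And>i j. i < I \<Longrightarrow> j < I \<Longrightarrow> i \<noteq> j \<Longrightarrow> Om $$ (i,j) = 0"
    using Om unfolding diagonal_mat_def by auto
  have O2entry: "\<And>i j. i < 2*I \<Longrightarrow> j < 2*I \<Longrightarrow> ?O2 $$ (i,j) =
      (if i = j then Om $$ (i mod I, i mod I) else 0)"
  proof -
    fix i j assume i: "i < 2*I" and j: "j < 2*I"
    show "?O2 $$ (i,j) = (if i = j then Om $$ (i mod I, i mod I) else 0)"
      using i j Omc Omoff unfolding Omega2_def
      by (cases "i < I"; cases "j < I") (auto simp: mod_if)
  qed
  have O2pos: "\<And>i. i < 2*I \<Longrightarrow> ?O2 $$ (i,i) > 0"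
    using O2entry Om(3) I1 by (simp add: mod_less_divisor)
  have O2Oi: "?O2 * diag_inv ?O2 = 1\<^sub>m (2*I)"
  proof (rule eq_matI)
    fix i j assume i: "i < dim_row (1\<^sub>m (2*I) :: real mat)" and j: "j < dim_col (1\<^sub>m (2*I) :: real mat)"
    hence i: "i < 2*I" and j: "j < 2*I" by auto
    have "(?O2 * diag_inv ?O2) $$ (i,j) = (\<Sum>k<2*I. ?O2 $$ (i,k) * diag_inv ?O2 $$ (k,j))"
      using i j O2c Oic by (simp add: scalar_prod_def lessThan_atLeast0)
    also have "\<dots> = (\<Sum>k<2*I. if k = j then ?O2 $$ (i,j) / ?O2 $$ (j,j) else 0)"
      by (rule sum.cong) (use O2c j in \<open>auto simp: diag_inv_def\<close>)
    also have "\<dots> = ?O2 $$ (i,j) / ?O2 $$ (j,j)" using j by (simp add: sum.delta')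
    also have "\<dots> = 1\<^sub>m (2*I) $$ (i,j)"
      using O2pos[OF j] O2entry[OF i j] i j by (auto simp: O2entry)
    finally show "(?O2 * diag_inv ?O2) $$ (i,j) = 1\<^sub>m (2*I) $$ (i,j)" .
  qed (use O2c Oic in auto)
  have split: "\<And>v. v \<in> carrier_vec (2*I) \<Longrightarrow>
      ?e \<bullet> (?O2 *\<^sub>v v) = ones_vec I \<bullet> (Om *\<^sub>v vec_first v I)"
  proof -
    fix v :: "real vec" assume v: "v \<in> carrier_vec (2*I)"
    hence v': "v \<in> carrier_vec (I+I)" by (simp add: mult_2)
    have "?O2 *\<^sub>v v = ?O2 *\<^sub>v (vec_first v I @\<^sub>v vec_last v I)"
      using vec_first_last_append[OF v'] by simp
    also have "\<dots> = (Om *\<^sub>v vec_first v I) @\<^sub>v (Om *\<^sub>v vec_last v I)"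
      unfolding Omega2_def by (rule mult_mat_vec_split[OF Omc Omc]) auto
    finally have "?e \<bullet> (?O2 *\<^sub>v v) = ?e \<bullet> ((Om *\<^sub>v vec_first v I) @\<^sub>v (Om *\<^sub>v vec_last v I))" by simp
    also have "\<dots> = ones_vec I \<bullet> (Om *\<^sub>v vec_first v I) + 0\<^sub>v I \<bullet> (Om *\<^sub>v vec_last v I)"
      by (rule scalar_prod_append[of _ I _ I]) (use Omc in auto)
    finally show "?e \<bullet> (?O2 *\<^sub>v v) = ones_vec I \<bullet> (Om *\<^sub>v vec_first v I)" using Omc by simp
  qed
  have momsum: "\<And>v. v \<in> carrier_vec I \<Longrightarrow>
      ones_vec I \<bullet> (Om *\<^sub>v v) = (\<Sum>i<I. Om $$ (i,i) * v $ i)"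
  proof -
    fix v :: "real vec" assume v: "v \<in> carrier_vec I"
    have "ones_vec I \<bullet> (Om *\<^sub>v v) = (\<Sum>i<I. (\<Sum>k<I. Om $$ (i,k) * v $ k))"
      using v Omc by (simp add: ones_vec_def scalar_prod_def lessThan_atLeast0)
    also have "\<dots> = (\<Sum>i<I. Om $$ (i,i) * v $ i)"
    proof (rule sum.cong[OF refl])
      fix i assume i: "i \<in> {..<I}"
      have "(\<Sum>k<I. Om $$ (i,k) * v $ k) = (\<Sum>k<I. if k = i then Om $$ (i,i) * v $ i else 0)"
        by (rule sum.cong) (use i Omoff in auto)
      thus "(\<Sum>k<I. Om $$ (i,k) * v $ k) = Om $$ (i,i) * v $ i" using i by (simp add: sum.delta')
    qed
    finally show "ones_vec I \<bullet> (Om *\<^sub>v v) = (\<Sum>i<I. Om $$ (i,i) * v $ i)" .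
  qed
  have part1: "\<forall>a\<in>carrier_vec (2*I). ?e \<bullet> (?O2 *\<^sub>v closure_rhs I B w Om fH k q a) = 0"
  proof
    fix a :: "real vec" assume a: "a \<in> carrier_vec (2*I)"
    define B1 where "B1 = block_conv I B (w 1)"
    define B2 where "B2 = block_conv I B (w 2)"
    define B3 where "B3 = block_conv I B (w 3)"
    define Oi where "Oi = diag_inv ?O2"
    define K where "K = k a"
    define Q where "Q = q a"
    define F where "F = fH (vec_first a I) @\<^sub>v 0\<^sub>v I"
    have Kc: "K \<in> carrier_mat (2*I) (2*I)" using k a K_def by auto
    have Qc: "Q \<in> carrier_mat (2*I) (2*I)" using q a Q_def by auto
    have B1c: "B1 \<in> carrier_mat (2*I) (2*I)" and B2c: "B2 \<in> carrier_mat (2*I) (2*I)"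
      and B3c: "B3 \<in> carrier_mat (2*I) (2*I)" unfolding B1_def B2_def B3_def by simp_all
    have Oic': "Oi \<in> carrier_mat (2*I) (2*I)" using Oic Oi_def by simp
    have fHc: "fH (vec_first a I) \<in> carrier_vec I" using fH by simp
    have Fc: "F \<in> carrier_vec (2*I)" unfolding F_def mult_2 using fHc by (rule append_carrier_vec) simp
    define X1 where "X1 = transpose_mat B2 *\<^sub>v (K *\<^sub>v (B3 *\<^sub>v a))"
    define X2 where "X2 = transpose_mat B3 *\<^sub>v (K *\<^sub>v (B2 *\<^sub>v a))"
    define Y where "Y = transpose_mat B1 *\<^sub>v ((Q * Q) *\<^sub>v (B1 *\<^sub>v a))"
    have X1c: "X1 \<in> carrier_vec (2*I)" unfolding X1_def using B2c B3c Kc a by auto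
    have X2c: "X2 \<in> carrier_vec (2*I)" unfolding X2_def using B2c B3c Kc a by auto
    have Yc: "Y \<in> carrier_vec (2*I)" unfolding Y_def using B1c Qc a by auto
    have zs1: "zero_sum B (w 1 1 1)" "zero_sum B (w 1 2 1)" using zs by auto
    have zs2: "zero_sum B (w 2 1 1)" "zero_sum B (w 2 2 1)" using zs by auto
    have zs3: "zero_sum B (w 3 1 1)" "zero_sum B (w 3 2 1)" using zs by auto
    have eT1: "?e \<bullet> (transpose_mat B1 *\<^sub>v z) = 0" if "z \<in> carrier_vec (2*I)" for z
      unfolding B1_def using zs1 that by (intro e_transpose[of I B "w 1"] I1) auto
    have eT2: "?e \<bullet> (transpose_mat B2 *\<^sub>v z) = 0" if "z \<in> carrier_vec (2*I)" for z
      unfolding B2_def using zs2 that by (intro e_transpose[of I B "w 2"] I1) auto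
    have eT3: "?e \<bullet> (transpose_mat B3 *\<^sub>v z) = 0" if "z \<in> carrier_vec (2*I)" for z
      unfolding B3_def using zs3 that by (intro e_transpose[of I B "w 3"] I1) auto
    have QQc: "Q * Q \<in> carrier_mat (2*I) (2*I)" using Qc by auto
    have eX1: "?e \<bullet> X1 = 0" unfolding X1_def
      by (rule eT2) (use B3c Kc a in auto)
    have eX2: "?e \<bullet> X2 = 0" unfolding X2_def
      by (rule eT3) (use B2c Kc a in auto)
    have eY: "?e \<bullet> Y = 0" unfolding Y_def
      by (rule eT1) (use B1c QQc a in auto)
    have M1: "(transpose_mat B2 * K * B3 - transpose_mat B3 * K * B2) *\<^sub>v a = X1 - X2"
      unfolding X1_def X2_def using B2c B3c Kc a
      by (subst minus_mult_distrib_mat_vec[of _ "2*I" "2*I"]) (auto simp: assoc_mult_mat_vec[of _ "2*I" "2*I" _ "2*I"])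
    have M2: "(transpose_mat B1 * (Q * Q) * B1) *\<^sub>v a = Y"
      unfolding Y_def using B1c Qc QQc a by (auto simp: assoc_mult_mat_vec[of _ "2*I" "2*I" _ "2*I"])
    have G: "closure_rhs I B w Om fH k q a = F + Oi *\<^sub>v (X1 - X2) - Oi *\<^sub>v Y"
      unfolding closure_rhs_def Let_def B1_def[symmetric] B2_def[symmetric] B3_def[symmetric]
        Oi_def[symmetric] K_def[symmetric] Q_def[symmetric] F_def[symmetric] M1 M2 ..
    have c1: "Oi *\<^sub>v (X1 - X2) \<in> carrier_vec (2*I)" using Oic' X1c X2c by auto
    have c2: "Oi *\<^sub>v Y \<in> carrier_vec (2*I)" using Oic' Yc by auto
    have "?O2 *\<^sub>v closure_rhs I B w Om fH k q a = ?O2 *\<^sub>v F + ?O2 *\<^sub>v (Oi *\<^sub>v (X1 - X2)) - ?O2 *\<^sub>v (Oi *\<^sub>v Y)"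
      unfolding G using O2c Fc c1 c2
      by (simp add: mult_minus_distrib_mat_vec[of _ "2*I" "2*I"] mult_add_distrib_mat_vec[of _ "2*I" "2*I"])
    also have "?O2 *\<^sub>v (Oi *\<^sub>v (X1 - X2)) = X1 - X2"
      using O2Oi O2c Oic' X1c X2c unfolding Oi_def
      by (metis assoc_mult_mat_vec minus_carrier_vec one_mult_mat_vec)
    also have "?O2 *\<^sub>v (Oi *\<^sub>v Y) = Y"
      using O2Oi O2c Oic' Yc unfolding Oi_def
      by (metis assoc_mult_mat_vec one_mult_mat_vec)
    finally have eq: "?O2 *\<^sub>v closure_rhs I B w Om fH k q a = ?O2 *\<^sub>v F + (X1 - X2) - Y" .
    have eF: "?e \<bullet> (?O2 *\<^sub>v F) = 0"
      using split[OF Fc] fH fHc unfolding F_def by (simp add: vec_first_app[OF fHc])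
    have OFc: "?O2 *\<^sub>v F \<in> carrier_vec (2*I)" using O2c Fc by auto
    have "?e \<bullet> (?O2 *\<^sub>v F + (X1 - X2) - Y) = ?e \<bullet> (?O2 *\<^sub>v F) + (?e \<bullet> X1 - ?e \<bullet> X2) - ?e \<bullet> Y"
      using OFc X1c X2c Yc
      by (simp add: scalar_prod_minus_distrib[of _ "2*I"] scalar_prod_add_distrib[of _ "2*I"])
    thus "?e \<bullet> (?O2 *\<^sub>v closure_rhs I B w Om fH k q a) = 0"
      unfolding eq using eF eX1 eX2 eY by simp
  qed
  have Gc: "\<And>a. a \<in> carrier_vec (2*I) \<Longrightarrow> closure_rhs I B w Om fH k q a \<in> carrier_vec (2*I)"
  proof -
    fix a :: "real vec"
    have "dim_row (diag_inv ?O2) = 2*I" using Oic by (rule carrier_matD)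
    hence "dim_vec (closure_rhs I B w Om fH k q a) = 2*I"
      unfolding closure_rhs_def Let_def by simp
    thus "closure_rhs I B w Om fH k q a \<in> carrier_vec (2*I)" by (rule carrier_vecI)
  qed
  show ?thesis
  proof (intro conjI part1 allI impI)
    fix a :: "real \<Rightarrow> real vec" and t0 t1 :: real
    assume le: "t0 \<le> t1"
    assume H: "\<forall>t\<in>{t0..t1}. a t \<in> carrier_vec (2*I) \<and>
               (\<forall>i<2*I. ((\<lambda>s. a s $ i) has_real_derivative
                          (closure_rhs I B w Om fH k q (a t) $ i)) (at t within {t0..t1}))"
    define f where "f s = (\<Sum>i<I. Om $$ (i,i) * a s $ i)" for s
    have fm: "\<And>t. t \<in> {t0..t1} \<Longrightarrow> ones_vec I \<bullet> (Om *\<^sub>v vec_first (a t) I) = f t"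
      unfolding f_def by (subst momsum) (auto simp: vec_first_def)
    have D0: "(f has_field_derivative 0) (at t within {t0..t1})" if t: "t \<in> {t0..t1}" for t
    proof -
      let ?G = "closure_rhs I B w Om fH k q (a t)"
      have "(f has_field_derivative (\<Sum>i<I. Om $$ (i,i) * ?G $ i)) (at t within {t0..t1})"
        unfolding f_def using H t by (intro DERIV_sum DERIV_cmult) auto
      moreover have "(\<Sum>i<I. Om $$ (i,i) * ?G $ i) = 0"
      proof -
        have "(\<Sum>i<I. Om $$ (i,i) * ?G $ i) = ones_vec I \<bullet> (Om *\<^sub>v vec_first ?G I)"
          by (subst momsum) (auto simp: vec_first_def)
        also have "\<dots> = ?e \<bullet> (?O2 *\<^sub>v ?G)" using split Gc H t by simp
        also have "\<dots> = 0" using part1 H t by simp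
        finally show ?thesis .
      qed
      ultimately show ?thesis by simp
    qed
    have "f t1 = f t0"
    proof (cases "t0 = t1")
      case False
      hence lt: "t0 < t1" using le by simp
      show ?thesis
      proof (rule DERIV_isconst_end[OF lt])
        show "continuous_on {t0..t1} f" by (rule DERIV_continuous_on[OF D0])
        fix x assume "t0 < x" "x < t1"
        thus "DERIV f x :> 0" using D0[of x] at_within_Icc_at[of t0 x t1] by simp
      qed
    qed simp
    thus "ones_vec I \<bullet> (Om *\<^sub>v vec_first (a t1) I) = ones_vec I \<bullet> (Om *\<^sub>v vec_first (a t0) I)"
      using fm le by simp
  qed
qed

end
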